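(* Let $L,T$ be finite distributive lattices and $p:L\to T$ a map such that (i) $p|_{\mathcal{J}(L)}$ is a quotient map, (ii) $p(\mathcal{J}(L))=\mathcal{J}(T)$, and (iii) $p$ is a join-preserving quotient map of posets. Let $p_0=p|_{\mathcal{J}(L)}:\mathcal{J}(L)\to\mathcal{J}(T)$. Then $\mathbf{B}_T\circ p=\hat{p_0}\circ\mathbf{B}_L$, where $\mathbf{B}_L:L\to\mathcal{O}(\mathcal{J}(L))$, $\mathbf{B}_L(a)=\{x\in\mathcal{J}(L):x\le a\}$ and $\mathbf{B}_T$ analogously are the Birkhoff isomorphisms; in particular $p$ is isomorphic to the induced map $\hat{p_0}$.
   Context: $\mathcal{J}(L)$ is the set of join-irreducible elements of $L$ (elements $x\ne0$ such that $x=a\vee b$ implies $x=a$ or $x=b$), with the order inherited from $L$. A quotient map between posets is a surjective order-preserving map $\phi:A\to B$ such that for all $a\le b$ in $B$ there are $x\le y$ in $A$ with $\phi(x)=a,\phi(y)=b$. $\mathcal{O}(Q)$ denotes the down-sets of a poset $Q$ under inclusion, $\downarrow x=\{m:m\le x\}$; for a quotient map $p_0:Q\to R$ of finite posets, $\hat{p_0}(\emptyset)=\emptyset$ and $\hat{p_0}(A)=\bigcup_i\downarrow p_0(a_i)$ over the maximal elements $a_i$ of $A$. Two maps $f:A\to B$, $f':A'\to B'$ are isomorphic if there are isomorphisms $g_1:A\to A'$, $g_2:B\to B'$ with $g_2\circ f=f'\circ g_1$. *)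

theory Defs
  imports Main
begin

text \<open>Finite distributive lattices are modelled by types of class
  finite, distrib_lattice, order_bot (every finite lattice has a least element 0).\<close>

definition join_irreducible :: "'a::{distrib_lattice,order_bot} \<Rightarrow> bool" where
  "join_irreducible x \<longleftrightarrow> x \<noteq> bot \<and> (\<forall>a b. x = sup a b \<longrightarrow> x = a \<or> x = b)"

definition JI :: "'a::{distrib_lattice,order_bot} set" where
  "JI = {x. join_irreducible x}"

definition quotient_map :: "'a::order set \<Rightarrow> 'b::order set \<Rightarrow> ('a \<Rightarrow> 'b) \<Rightarrow> bool" where
  "quotient_map A B f \<longleftrightarrow>
     f ` A = B \<and>
     (\<forall>x\<in>A. \<forall>y\<in>A. x \<le> y \<longrightarrow> f x \<le> f y) \<and>
     (\<forall>a\<in>B. \<forall>b\<in>B. a \<le> b \<longrightarrow> (\<exists>x\<in>A. \<exists>y\<in>A. x \<le> y \<and> f x = a \<and> f y = b))"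

definition birkhoff :: "'a::{distrib_lattice,order_bot} \<Rightarrow> 'a set" where
  "birkhoff a = {x \<in> JI. x \<le> a}"

definition maximal_elems :: "'a::order set \<Rightarrow> 'a set" where
  "maximal_elems A = {a \<in> A. \<forall>y\<in>A. a \<le> y \<longrightarrow> y = a}"

definition hat :: "'r::order set \<Rightarrow> ('q::order \<Rightarrow> 'r) \<Rightarrow> 'q set \<Rightarrow> 'r set" where
  "hat R p0 A = (\<Union>a\<in>maximal_elems A. {m \<in> R. m \<le> p0 a})"

end

theory Submission
  imports Defs
begin

lemma ji_prime:
  fixes y u v :: "'b::{distrib_lattice,order_bot}"
  assumes "join_irreducible y" "y \<le> sup u v"
  shows "y \<le> u \<or> y \<le> v"
proof -
  have "y = inf y (sup u v)" using assms(2) by (simp add: inf_absorb1)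
  also have "\<dots> = sup (inf y u) (inf y v)" by (rule inf_sup_distrib1)
  finally have "y = inf y u \<or> y = inf y v" using assms(1) unfolding join_irreducible_def by blast
  thus ?thesis using inf.absorb_iff1[of y u] inf.absorb_iff1[of y v] by auto
qed

lemma key:
  fixes p :: "'a::{finite,distrib_lattice,order_bot} \<Rightarrow> 'b::{finite,distrib_lattice,order_bot}"
  assumes pbot: "p bot = bot"
    and js: "\<forall>x y. p (sup x y) = sup (p x) (p y)"
    and yj: "join_irreducible y"
  shows "y \<le> p a \<Longrightarrow> \<exists>x. join_irreducible x \<and> x \<le> a \<and> y \<le> p x"
proof (induction "card {z. z < a}" arbitrary: a rule: less_induct)
  case less
  show ?case
  proof (cases "a = bot")
    case True
    then have "y = bot" using less.prems pbot by (simp add: bot_unique)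
    then show ?thesis using yj unfolding join_irreducible_def by blast
  next
    case nb: False
    show ?thesis
    proof (cases "join_irreducible a")
      case True then show ?thesis using less.prems by blast
    next
      case False
      then obtain u v where uv: "a = sup u v" "a \<noteq> u" "a \<noteq> v"
        using nb unfolding join_irreducible_def by blast
      have ua: "u < a" "v < a" using uv by (auto simp: less_le)
      have cu: "card {z. z < u} < card {z. z < a}" if "u < a" for u
      proof (rule psubset_card_mono)
        show "finite {z. z < a}" by simp
        have "{z. z < u} \<subseteq> {z. z < a}" using that by (blast intro: less_trans)
        moreover have "u \<in> {z. z < a}" "u \<notin> {z. z < u}" using that by auto
        ultimately show "{z. z < u} \<subset> {z. z < a}" by blast
      qed
      have "y \<le> sup (p u) (p v)" using less.prems js uv(1) by simp
      hence "y \<le> p u \<or> y \<le> p v" using ji_prime yj by blast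
      thus ?thesis
      proof
        assume "y \<le> p u"
        then obtain x where x: "join_irreducible x" "x \<le> u" "y \<le> p x"
          using less.hyps[OF cu[OF ua(1)]] by blast
        have "x \<le> a" using order.trans[OF x(2) less_imp_le[OF ua(1)]] .
        thus ?thesis using x by blast
      next
        assume "y \<le> p v"
        then obtain x where x: "join_irreducible x" "x \<le> v" "y \<le> p x"
          using less.hyps[OF cu[OF ua(2)]] by blast
        have "x \<le> a" using order.trans[OF x(2) less_imp_le[OF ua(2)]] .
        thus ?thesis using x by blast
      qed
    qed
  qed
qed

theorem mainTheorem18:
  fixes p :: "'a::{finite,distrib_lattice,order_bot} \<Rightarrow> 'b::{finite,distrib_lattice,order_bot}"
  assumes "quotient_map (JI :: 'a set) (p ` JI) p"
    and "p ` (JI :: 'a set) = (JI :: 'b set)"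
    and "quotient_map (UNIV :: 'a set) (UNIV :: 'b set) p"
    and "\<forall>x y. p (sup x y) = sup (p x) (p y)"
  shows "\<forall>a. birkhoff (p a) = hat (JI :: 'b set) p (birkhoff a)"
proof
  fix a :: 'a
  have mono: "p x \<le> p y" if "x \<le> y" for x y
  proof -
    have e: "sup x y = y" using that by (rule sup_absorb2)
    have "p (sup x y) = sup (p x) (p y)" using assms(4) by blast
    hence "sup (p x) (p y) = p y" using e by simp
    thus ?thesis by (simp add: le_iff_sup)
  qed
  have "surj p" using assms(3) unfolding quotient_map_def by (rule conjunct1)
  then obtain z where z: "bot = p z" by (rule surjE)
  have "p bot \<le> p z" by (rule mono) (rule bot_least)
  hence "p bot \<le> bot" by (simp only: z[symmetric])
  hence pbot: "p bot = bot" by (rule bot_unique[THEN iffD1])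
  show "birkhoff (p a) = hat JI p (birkhoff a)"
  proof
    show "birkhoff (p a) \<subseteq> hat JI p (birkhoff a)"
    proof
      fix y assume "y \<in> birkhoff (p a)"
      hence yj: "join_irreducible y" and ya: "y \<le> p a" by (auto simp: birkhoff_def JI_def)
      obtain x where x: "join_irreducible x" "x \<le> a" "y \<le> p x"
        using key[OF pbot assms(4) yj ya] by blast
      have "x \<in> birkhoff a" using x by (simp add: birkhoff_def JI_def)
      then obtain m where m: "m \<in> birkhoff a" "x \<le> m" "\<forall>w\<in>birkhoff a. m \<le> w \<longrightarrow> m = w"
        using finite_has_maximal2[OF finite[of "birkhoff a"] \<open>x \<in> birkhoff a\<close>] by blast
      have "m \<in> maximal_elems (birkhoff a)" using m by (auto simp: maximal_elems_def)
      moreover have "y \<le> p m" using x(3) mono[OF m(2)] by (rule order_trans)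
      ultimately show "y \<in> hat JI p (birkhoff a)" using yj by (auto simp: hat_def JI_def)
    qed
  next
    show "hat JI p (birkhoff a) \<subseteq> birkhoff (p a)"
    proof
      fix y assume "y \<in> hat JI p (birkhoff a)"
      then obtain x where "x \<in> birkhoff a" "y \<in> JI" "y \<le> p x"
        by (auto simp: hat_def maximal_elems_def)
      moreover hence "p x \<le> p a" using mono by (auto simp: birkhoff_def)
      ultimately show "y \<in> birkhoff (p a)" by (auto simp: birkhoff_def intro: order_trans)
    qed
  qed
qed

end
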